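(* If $f$ satisfies the rate conditions of order $0$, then for every $z\in D$, $f\left(\overline{J_{cu}(z,L)}\cap\bigl(\overline B_c(\pi_\lambda z,R_\Lambda)\times\overline B_u(R)\times\overline B_s(R)\bigr)\right)\subset J_{cu}(f(z),L)$.
   Context: $c,u,s$ positive integers, $\Lambda=(\mathbb{R}/\mathbb{Z})^c$, $R_\Lambda=\tfrac12$; points are "in the same chart" if their $\lambda$-components have lifts to $\mathbb{R}^c$ at distance $\le R_\Lambda$; differences, norms, cones and derivatives are computed in such lifts, and $\overline B_c(\lambda,R_\Lambda)$ is the closed ball of radius $R_\Lambda$ about a lift of $\lambda$. $\overline B_n(R)$ closed ball at $0$ in $\mathbb{R}^n$; Euclidean norms. $0<R<R_\Lambda/2$, $D=\Lambda\times\overline B_u(R)\times\overline B_s(R)$, $z=(\lambda,x,y)$, projections $\pi_\lambda,\pi_x,\pi_y,\pi_{(\lambda,x)}$; $f:D\to\Lambda\times\mathbb{R}^u\times\mathbb{R}^s$ is $C^1$, $f=(f_\lambda,f_x,f_y)$. $m(A)=\max\{c:\|Av\|\ge c\|v\|\}$, $m(\mathbf A)=\inf_{A\in\mathbf A}m(A)$; $[\partial g/\partial w(U)]$ = set of matrices with $(i,j)$ entry in $[\inf_U\partial g_i/\partial w_j,\sup_U\partial g_i/\partial w_j]$; $P(z)=\{w\in D:\|\pi_\lambda w-\pi_\lambda z\|\le R_\Lambda/2\}$. Fix $L\in(2R/R_\Lambda,1)$. $\mu_{s,1}=\sup_D\{\|\partial_yf_y\|+\frac1L\|\partial_{(\lambda,x)}f_y\|\}$,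 $\xi_{u,1,P}=\inf_{z\in D}m[\partial_xf_x(P(z))]-\frac1L\sup_D\|\partial_{(\lambda,y)}f_x\|$, $\mu_{cs,1}=\sup_D\{\|\partial_{(\lambda,y)}f_{(\lambda,y)}\|+L\|\partial_xf_{(\lambda,y)}\|\}$, $\xi_{cu,1,P}=\inf_{z\in D}m[\partial_{(\lambda,x)}f_{(\lambda,x)}(P(z))]-L\sup_D\|\partial_yf_{(\lambda,x)}\|$. Rate conditions of order $0$: $\mu_{s,1}<1<\xi_{u,1,P}$, $\mu_{cs,1}<\xi_{u,1,P}$, $\mu_{s,1}<\xi_{cu,1,P}$. Center-unstable cone: $J_{cu}(z,M)=\{(\lambda,x,y):\|y-\pi_yz\|<M\|(\lambda,x)-\pi_{(\lambda,x)}z\|\}\cup\{z\}$. *)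

theory Defs
  imports "HOL-Analysis.Analysis"
begin

text \<open>We work in the universal cover: the torus component \<open>\<Lambda> = (R/Z)^c\<close> is
represented by its lift \<open>real^'c\<close>, and the map f by a lift F that is
Z^c-equivariant in the sense of lifts of torus maps.\<close>

type_synonym ('c,'u,'s) pt = "(real^'c) \<times> (real^'u) \<times> (real^'s)"

definition Dom :: "real \<Rightarrow> ('c::finite,'u::finite,'s::finite) pt set" where
  "Dom R = UNIV \<times> cball 0 R \<times> cball 0 R"

text \<open>\<open>P(z) = {w \<in> D. |\<lambda>_w - \<lambda>_z| \<le> R_\<Lambda>/2}\<close>, with \<open>R_\<Lambda> = 1/2\<close>.\<close>
definition Pset :: "real \<Rightarrow> ('c::finite,'u::finite,'s::finite) pt \<Rightarrow> ('c,'u,'s) pt set" where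
  "Pset R z = {w \<in> Dom R. norm (fst w - fst z) \<le> 1/4}"

definition mlow :: "('a::real_normed_vector \<Rightarrow> 'b::real_normed_vector) \<Rightarrow> real" where
  "mlow A = Sup {c. \<forall>v. c * norm v \<le> norm (A v)}"

definition mset :: "('a::real_normed_vector \<Rightarrow> 'b::real_normed_vector) set \<Rightarrow> real" where
  "mset S = Inf (mlow ` S)"

text \<open>Interval matrix \<open>[\<partial>g/\<partial>w(U)]\<close>: all (linear maps = matrices) whose (i,j) entry,
w.r.t. the standard bases, lies between the inf and sup over U of the
corresponding entry of the derivative G.\<close>
definition ihull :: "'w set \<Rightarrow> ('w \<Rightarrow> 'a::euclidean_space \<Rightarrow> 'b::euclidean_space) \<Rightarrow> ('a \<Rightarrow> 'b) set" where
  "ihull U G = {A. linear A \<and> (\<forall>i\<in>Basis. \<forall>j\<in>Basis.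
      (INF w\<in>U. G w j \<bullet> i) \<le> A j \<bullet> i \<and> A j \<bullet> i \<le> (SUP w\<in>U. G w j \<bullet> i))}"

definition d_y_fy :: "(('c::finite,'u::finite,'s::finite) pt \<Rightarrow> ('c,'u,'s) pt \<Rightarrow> ('c,'u,'s) pt)
    \<Rightarrow> ('c,'u,'s) pt \<Rightarrow> real^'s \<Rightarrow> real^'s" where
  "d_y_fy F' w = (\<lambda>v. snd (snd (F' w (0, 0, v))))"

definition d_lx_fy :: "(('c::finite,'u::finite,'s::finite) pt \<Rightarrow> ('c,'u,'s) pt \<Rightarrow> ('c,'u,'s) pt)
    \<Rightarrow> ('c,'u,'s) pt \<Rightarrow> ((real^'c) \<times> (real^'u)) \<Rightarrow> real^'s" where
  "d_lx_fy F' w = (\<lambda>(a,b). snd (snd (F' w (a, b, 0))))"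

definition d_x_fx :: "(('c::finite,'u::finite,'s::finite) pt \<Rightarrow> ('c,'u,'s) pt \<Rightarrow> ('c,'u,'s) pt)
    \<Rightarrow> ('c,'u,'s) pt \<Rightarrow> real^'u \<Rightarrow> real^'u" where
  "d_x_fx F' w = (\<lambda>v. fst (snd (F' w (0, v, 0))))"

definition d_ly_fx :: "(('c::finite,'u::finite,'s::finite) pt \<Rightarrow> ('c,'u,'s) pt \<Rightarrow> ('c,'u,'s) pt)
    \<Rightarrow> ('c,'u,'s) pt \<Rightarrow> ((real^'c) \<times> (real^'s)) \<Rightarrow> real^'u" where
  "d_ly_fx F' w = (\<lambda>(a,b). fst (snd (F' w (a, 0, b))))"

definition d_ly_fly :: "(('c::finite,'u::finite,'s::finite) pt \<Rightarrow> ('c,'u,'s) pt \<Rightarrow> ('c,'u,'s) pt)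
    \<Rightarrow> ('c,'u,'s) pt \<Rightarrow> ((real^'c) \<times> (real^'s)) \<Rightarrow> ((real^'c) \<times> (real^'s))" where
  "d_ly_fly F' w = (\<lambda>(a,b). let r = F' w (a, 0, b) in (fst r, snd (snd r)))"

definition d_x_fly :: "(('c::finite,'u::finite,'s::finite) pt \<Rightarrow> ('c,'u,'s) pt \<Rightarrow> ('c,'u,'s) pt)
    \<Rightarrow> ('c,'u,'s) pt \<Rightarrow> real^'u \<Rightarrow> ((real^'c) \<times> (real^'s))" where
  "d_x_fly F' w = (\<lambda>v. let r = F' w (0, v, 0) in (fst r, snd (snd r)))"

definition d_lx_flx :: "(('c::finite,'u::finite,'s::finite) pt \<Rightarrow> ('c,'u,'s) pt \<Rightarrow> ('c,'u,'s) pt)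
    \<Rightarrow> ('c,'u,'s) pt \<Rightarrow> ((real^'c) \<times> (real^'u)) \<Rightarrow> ((real^'c) \<times> (real^'u))" where
  "d_lx_flx F' w = (\<lambda>(a,b). let r = F' w (a, b, 0) in (fst r, fst (snd r)))"

definition d_y_flx :: "(('c::finite,'u::finite,'s::finite) pt \<Rightarrow> ('c,'u,'s) pt \<Rightarrow> ('c,'u,'s) pt)
    \<Rightarrow> ('c,'u,'s) pt \<Rightarrow> real^'s \<Rightarrow> ((real^'c) \<times> (real^'u))" where
  "d_y_flx F' w = (\<lambda>v. let r = F' w (0, 0, v) in (fst r, fst (snd r)))"

definition mu_s1 :: "real \<Rightarrow> real \<Rightarrow> (('c::finite,'u::finite,'s::finite) pt \<Rightarrow> ('c,'u,'s) pt \<Rightarrow> ('c,'u,'s) pt) \<Rightarrow> real" where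
  "mu_s1 R L F' = (SUP w\<in>Dom R. onorm (d_y_fy F' w) + (1/L) * onorm (d_lx_fy F' w))"

definition xi_u1P :: "real \<Rightarrow> real \<Rightarrow> (('c::finite,'u::finite,'s::finite) pt \<Rightarrow> ('c,'u,'s) pt \<Rightarrow> ('c,'u,'s) pt) \<Rightarrow> real" where
  "xi_u1P R L F' = (INF z\<in>Dom R. mset (ihull (Pset R z) (d_x_fx F')))
                    - (1/L) * (SUP w\<in>Dom R. onorm (d_ly_fx F' w))"

definition mu_cs1 :: "real \<Rightarrow> real \<Rightarrow> (('c::finite,'u::finite,'s::finite) pt \<Rightarrow> ('c,'u,'s) pt \<Rightarrow> ('c,'u,'s) pt) \<Rightarrow> real" where
  "mu_cs1 R L F' = (SUP w\<in>Dom R. onorm (d_ly_fly F' w) + L * onorm (d_x_fly F' w))"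

definition xi_cu1P :: "real \<Rightarrow> real \<Rightarrow> (('c::finite,'u::finite,'s::finite) pt \<Rightarrow> ('c,'u,'s) pt \<Rightarrow> ('c,'u,'s) pt) \<Rightarrow> real" where
  "xi_cu1P R L F' = (INF z\<in>Dom R. mset (ihull (Pset R z) (d_lx_flx F')))
                    - L * (SUP w\<in>Dom R. onorm (d_y_flx F' w))"

definition rate_conditions_0 :: "real \<Rightarrow> real \<Rightarrow> (('c::finite,'u::finite,'s::finite) pt \<Rightarrow> ('c,'u,'s) pt \<Rightarrow> ('c,'u,'s) pt) \<Rightarrow> bool" where
  "rate_conditions_0 R L F' \<longleftrightarrow>
     mu_s1 R L F' < 1 \<and> 1 < xi_u1P R L F' \<and>
     mu_cs1 R L F' < xi_u1P R L F' \<and> mu_s1 R L F' < xi_cu1P R L F'"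

definition Jcu :: "('c::finite,'u::finite,'s::finite) pt \<Rightarrow> real \<Rightarrow> ('c,'u,'s) pt set" where
  "Jcu z M = {w. norm (snd (snd w) - snd (snd z))
                   < M * norm ((fst w, fst (snd w)) - (fst z, fst (snd z)))} \<union> {z}"

text \<open>F is a lift of a map \<open>D \<rightarrow> \<Lambda> \<times> R^u \<times> R^s\<close>: integer translations in \<open>\<lambda>\<close>
change \<open>F_\<lambda>\<close> by an integer vector and leave \<open>F_x, F_y\<close> unchanged.\<close>
definition int_vec :: "real^'c \<Rightarrow> bool" where
  "int_vec k \<longleftrightarrow> (\<forall>i. k $ i \<in> \<int>)"

definition is_torus_lift :: "real \<Rightarrow> (('c::finite,'u::finite,'s::finite) pt \<Rightarrow> ('c,'u,'s) pt) \<Rightarrow> bool" where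
  "is_torus_lift R F \<longleftrightarrow> (\<forall>l x y k. int_vec k \<longrightarrow> (l, x, y) \<in> Dom R \<longrightarrow>
      int_vec (fst (F (l + k, x, y)) - fst (F (l, x, y))) \<and>
      snd (F (l + k, x, y)) = snd (F (l, x, y)))"

definition C1_on_with :: "('c::finite,'u::finite,'s::finite) pt set \<Rightarrow> (('c,'u,'s) pt \<Rightarrow> ('c,'u,'s) pt)
    \<Rightarrow> (('c,'u,'s) pt \<Rightarrow> ('c,'u,'s) pt \<Rightarrow> ('c,'u,'s) pt) \<Rightarrow> bool" where
  "C1_on_with S F F' \<longleftrightarrow> (\<forall>w\<in>S. (F has_derivative F' w) (at w within S)) \<and>
      (\<forall>i\<in>Basis. \<forall>j\<in>Basis. continuous_on S (\<lambda>w. F' w j \<bullet> i))"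

end

theory Submission
  imports Defs
begin


lemma ex_nonzero: "\<exists>v::'a::euclidean_space. v \<noteq> 0"
  using nonempty_Basis by (metis ex_in_conv nonzero_Basis)

lemma mlow_set_bdd: "bdd_above {c. \<forall>v. c * norm v \<le> norm ((A::'a::euclidean_space \<Rightarrow> 'b::real_normed_vector) v)}"
proof -
  obtain v0 :: 'a where v0: "v0 \<noteq> 0" using ex_nonzero by blast
  show ?thesis
  proof (rule bdd_aboveI[where M="norm (A v0) / norm v0"])
    fix c assume "c \<in> {c. \<forall>v. c * norm v \<le> norm (A v)}"
    then have "c * norm v0 \<le> norm (A v0)" by auto
    then show "c \<le> norm (A v0) / norm v0" using v0 by (simp add: field_simps)
  qed
qed

lemma mlow_nonneg: "0 \<le> mlow (A::'a::euclidean_space \<Rightarrow> 'b::real_normed_vector)"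
  unfolding mlow_def by (rule cSup_upper[OF _ mlow_set_bdd]) auto

lemma mlow_le: "mlow (A::'a::euclidean_space \<Rightarrow> 'b::real_normed_vector) * norm v \<le> norm (A v)"
proof (cases "v = 0")
  case True then show ?thesis by simp
next
  case False
  have "mlow A \<le> norm (A v) / norm v"
    unfolding mlow_def
  proof (rule cSup_least)
    show "{c. \<forall>v. c * norm v \<le> norm (A v)} \<noteq> {}" by (auto intro: exI[of _ 0])
    fix c assume "c \<in> {c. \<forall>v. c * norm v \<le> norm (A v)}"
    then have "c * norm v \<le> norm (A v)" by auto
    then show "c \<le> norm (A v) / norm v" using False by (simp add: field_simps)
  qed
  then show ?thesis using False by (simp add: field_simps)
qed

lemma mset_nonneg: "S \<noteq> {} \<Longrightarrow> 0 \<le> mset (S::('a::euclidean_space \<Rightarrow> 'b::real_normed_vector) set)"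
  unfolding mset_def by (rule cINF_greatest) (auto intro: mlow_nonneg)

lemma mset_le: "A \<in> S \<Longrightarrow> mset (S::('a::euclidean_space \<Rightarrow> 'b::real_normed_vector) set) \<le> mlow A"
  unfolding mset_def by (rule cINF_lower) (auto intro: mlow_nonneg bdd_belowI[where m=0])




lemma Dom_convex: "convex (Dom R)" unfolding Dom_def
  by (intro convex_Times convex_UNIV convex_cball)

lemma deriv_periodic:
  fixes F :: "('c::finite,'u::finite,'s::finite) pt \<Rightarrow> ('c,'u,'s) pt"
    and F' :: "('c,'u,'s) pt \<Rightarrow> ('c,'u,'s) pt \<Rightarrow> ('c,'u,'s) pt"
  assumes R: "0 < R" and lift: "is_torus_lift R F" and C1: "C1_on_with (Dom R) F F'"
    and k: "int_vec k" and w: "w \<in> Dom R" and ij: "i \<in> Basis" "j \<in> Basis"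
  shows "F' (fst w + k, snd w) j \<bullet> i = F' w j \<bullet> i"
proof -
  define \<tau> where "\<tau> = (\<lambda>w::('c,'u,'s) pt. (fst w + k, snd w))"
  have tauD: "\<tau> w \<in> Dom R" if "w \<in> Dom R" for w using that by (auto simp: \<tau>_def Dom_def)
  have der: "\<And>w. w \<in> Dom R \<Longrightarrow> (F has_derivative F' w) (at w within Dom R)"
    using C1 unfolding C1_on_with_def by blast
  have contF: "continuous_on (Dom R) F" by (rule has_derivative_continuous_on[OF der])
  have conttau: "continuous_on (Dom R) \<tau>" unfolding \<tau>_def by (intro continuous_intros)
  have contFt: "continuous_on (Dom R) (\<lambda>w. F (\<tau> w))"
    by (rule continuous_on_compose2[OF contF conttau]) (auto intro: tauD)
  have conn: "connected (Dom R)" by (rule convex_connected[OF Dom_convex])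
  have const: "\<exists>c. \<forall>w\<in>Dom R. fst (F (\<tau> w)) $ m - fst (F w) $ m = c" for m
  proof -
    have "(\<lambda>w. fst (F (\<tau> w)) $ m - fst (F w) $ m) constant_on Dom R"
    proof (rule continuous_discrete_range_constant[OF conn])
      show "continuous_on (Dom R) (\<lambda>w. fst (F (\<tau> w)) $ m - fst (F w) $ m)"
        by (intro continuous_intros contFt contF)
      fix x :: "('c,'u,'s) pt" assume x: "x \<in> Dom R"
      have intv: "\<And>y. y \<in> Dom R \<Longrightarrow> fst (F (\<tau> y)) $ m - fst (F y) $ m \<in> \<int>"
      proof -
        fix y :: "('c,'u,'s) pt" assume y: "y \<in> Dom R"
        obtain l a b where "y = (l, a, b)" by (cases y) auto
        then show "fst (F (\<tau> y)) $ m - fst (F y) $ m \<in> \<int>"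
          using lift k y unfolding is_torus_lift_def int_vec_def \<tau>_def by force
      qed
      show "\<exists>e>0. \<forall>y::('c,'u,'s) pt. y \<in> Dom R \<and> fst (F (\<tau> y)) $ m - fst (F y) $ m \<noteq> fst (F (\<tau> x)) $ m - fst (F x) $ m
             \<longrightarrow> e \<le> norm (fst (F (\<tau> y)) $ m - fst (F y) $ m - (fst (F (\<tau> x)) $ m - fst (F x) $ m))"
      proof (intro exI[of _ 1] conjI allI impI)
        fix y assume y: "y \<in> Dom R \<and> fst (F (\<tau> y)) $ m - fst (F y) $ m \<noteq> fst (F (\<tau> x)) $ m - fst (F x) $ m"
        obtain p where p: "fst (F (\<tau> y)) $ m - fst (F y) $ m = of_int p" using intv y Ints_cases by metis
        obtain q where q: "fst (F (\<tau> x)) $ m - fst (F x) $ m = of_int q" using intv x Ints_cases by metis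
        have "p \<noteq> q" using y p q by auto
        then have "1 \<le> \<bar>p - q\<bar>" by arith
        then have "1 \<le> \<bar>real_of_int p - of_int q\<bar>" by (metis of_int_1_le_iff of_int_abs of_int_diff)
        then show "1 \<le> norm (fst (F (\<tau> y)) $ m - fst (F y) $ m - (fst (F (\<tau> x)) $ m - fst (F x) $ m))"
          using p q by simp
      qed simp
    qed
    then show ?thesis unfolding constant_on_def by blast
  qed
  then obtain cf where cf: "\<And>m w. w \<in> Dom R \<Longrightarrow> fst (F (\<tau> w)) $ m - fst (F w) $ m = cf m" by metis
  define C :: "('c,'u,'s) pt" where "C = ((\<chi> m. cf m), 0, 0)"
  have FtC: "F (\<tau> w) = F w + C" if "w \<in> Dom R" for w
  proof -
    obtain l a b where lab: "w = (l, a, b)" by (cases w) auto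
    have s: "snd (F (\<tau> w)) = snd (F w)"
      using lift k that lab unfolding is_torus_lift_def \<tau>_def by force
    have f: "fst (F (\<tau> w)) = fst (F w) + (\<chi> m. cf m)"
      using cf[OF that] by (simp add: vec_eq_iff algebra_simps)
    show ?thesis using s f unfolding C_def by (simp add: prod_eq_iff)
  qed
  define Dint :: "('c,'u,'s) pt set" where "Dint = UNIV \<times> ball 0 R \<times> ball 0 R"
  have Dint_open: "open Dint" unfolding Dint_def by (intro open_Times open_UNIV open_ball)
  have Dint_sub: "Dint \<subseteq> Dom R" unfolding Dint_def Dom_def by auto
  have cl: "closure Dint = Dom R" unfolding Dint_def Dom_def closure_Times using R by simp
  have per_int: "F' (\<tau> v) = F' v" if v: "v \<in> Dint" for v
  proof -
    have tv: "\<tau> v \<in> Dint" using v by (auto simp: \<tau>_def Dint_def)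
    have d1: "(F has_derivative F' (\<tau> v)) (at (\<tau> v))"
      using der[of "\<tau> v"] tv Dint_sub at_within_open_subset[OF tv Dint_open Dint_sub] by auto
    have dt: "(\<tau> has_derivative (\<lambda>h. h)) (at v)"
      unfolding \<tau>_def by (auto intro!: derivative_eq_intros)
    have d2: "((\<lambda>w. F (\<tau> w)) has_derivative F' (\<tau> v)) (at v)"
      using has_derivative_compose[OF dt d1] by simp
    have d3: "((\<lambda>w. F w + C) has_derivative F' (\<tau> v)) (at v)"
      by (rule has_derivative_transform_within_open[OF d2 Dint_open v]) (use FtC Dint_sub in auto)
    have d4: "(F has_derivative F' (\<tau> v)) (at v)"
      using has_derivative_add_const[OF d3, of "-C"] by simp
    have d5: "(F has_derivative F' v) (at v)"
      using der[of v] v Dint_sub at_within_open_subset[OF v Dint_open Dint_sub] by auto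
    show ?thesis by (rule has_derivative_unique[OF d4 d5])
  qed
  have contE: "continuous_on (Dom R) (\<lambda>w. F' w j \<bullet> i)"
    using C1 ij unfolding C1_on_with_def by blast
  have contEt: "continuous_on (Dom R) (\<lambda>w. F' (\<tau> w) j \<bullet> i)"
    by (rule continuous_on_compose2[OF contE conttau]) (auto intro: tauD)
  have "F' (\<tau> w) j \<bullet> i - F' w j \<bullet> i = 0"
  proof (rule continuous_constant_on_closure[where S=Dint and f="\<lambda>w. F' (\<tau> w) j \<bullet> i - F' w j \<bullet> i"])
    show "continuous_on (closure Dint) (\<lambda>w. F' (\<tau> w) j \<bullet> i - F' w j \<bullet> i)"
      unfolding cl by (intro continuous_intros contE contEt)
    show "\<And>x. x \<in> Dint \<Longrightarrow> F' (\<tau> x) j \<bullet> i - F' x j \<bullet> i = 0" using per_int by simp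
    show "w \<in> closure Dint" using w cl by simp
  qed
  then show ?thesis by (simp add: \<tau>_def)
qed




lemma onorm_entries_le:
  fixes f :: "'a::euclidean_space \<Rightarrow> 'b::euclidean_space"
  assumes lin: "linear f" and b: "\<And>i j. i \<in> Basis \<Longrightarrow> j \<in> Basis \<Longrightarrow> \<bar>f j \<bullet> i\<bar> \<le> b i j"
  shows "onorm f \<le> (\<Sum>j\<in>Basis. \<Sum>i\<in>Basis. b i j)"
proof (rule onorm_le)
  fix x :: 'a
  have "f x = f (\<Sum>j\<in>Basis. (x \<bullet> j) *\<^sub>R j)" by (simp add: euclidean_representation)
  also have "\<dots> = (\<Sum>j\<in>Basis. (x \<bullet> j) *\<^sub>R f j)" by (simp add: linear_sum[OF lin] linear_scale[OF lin])
  finally have "norm (f x) \<le> (\<Sum>j\<in>Basis. norm ((x \<bullet> j) *\<^sub>R f j))" by (metis norm_sum)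
  also have "\<dots> \<le> (\<Sum>j\<in>Basis. norm x * (\<Sum>i\<in>Basis. b i j))"
  proof (rule sum_mono)
    fix j :: 'a assume j: "j \<in> Basis"
    have "norm (f j) \<le> (\<Sum>i\<in>Basis. \<bar>f j \<bullet> i\<bar>)" by (rule norm_le_l1)
    also have "\<dots> \<le> (\<Sum>i\<in>Basis. b i j)" by (rule sum_mono) (use b j in auto)
    finally have 1: "norm (f j) \<le> (\<Sum>i\<in>Basis. b i j)" .
    have 2: "\<bar>x \<bullet> j\<bar> \<le> norm x" using j by (rule Basis_le_norm)
    show "norm ((x \<bullet> j) *\<^sub>R f j) \<le> norm x * (\<Sum>i\<in>Basis. b i j)"
      using mult_mono[OF 2 1] by simp
  qed
  also have "\<dots> = (\<Sum>j\<in>Basis. \<Sum>i\<in>Basis. b i j) * norm x" by (simp add: sum_distrib_left mult.commute)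
  finally show "norm (f x) \<le> (\<Sum>j\<in>Basis. \<Sum>i\<in>Basis. b i j) * norm x" .
qed

lemma deriv_bounded:
  fixes F :: "('c::finite,'u::finite,'s::finite) pt \<Rightarrow> ('c,'u,'s) pt"
    and F' :: "('c,'u,'s) pt \<Rightarrow> ('c,'u,'s) pt \<Rightarrow> ('c,'u,'s) pt"
  assumes R: "0 < R" and lift: "is_torus_lift R F" and C1: "C1_on_with (Dom R) F F'"
  shows "\<exists>B. \<forall>w\<in>Dom R. onorm (F' w) \<le> B"
proof -
  define K :: "('c,'u,'s) pt set" where "K = cbox 0 (\<chi> i. 1) \<times> cball 0 R \<times> cball 0 R"
  have Kc: "compact K" unfolding K_def by (intro compact_Times compact_cbox compact_cball)
  have KD: "K \<subseteq> Dom R" unfolding K_def Dom_def by auto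
  have bnd: "\<exists>b. \<forall>w\<in>Dom R. \<bar>F' w j \<bullet> i\<bar> \<le> b" if ij: "i \<in> Basis" "j \<in> Basis" for i j
  proof -
    have contE: "continuous_on K (\<lambda>w. F' w j \<bullet> i)"
      using C1 ij KD unfolding C1_on_with_def by (meson continuous_on_subset)
    have "bounded ((\<lambda>w. F' w j \<bullet> i) ` K)"
      by (rule compact_imp_bounded[OF compact_continuous_image[OF contE Kc]])
    then obtain b where b: "\<And>w. w \<in> K \<Longrightarrow> \<bar>F' w j \<bullet> i\<bar> \<le> b"
      unfolding bounded_iff by auto
    show ?thesis
    proof (intro exI ballI)
      fix w :: "('c,'u,'s) pt" assume w: "w \<in> Dom R"
      define k :: "real^'c" where "k = (\<chi> m. - of_int \<lfloor>fst w $ m\<rfloor>)"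
      have k: "int_vec k" unfolding int_vec_def k_def by auto
      have c1: "fst w + k \<in> cbox 0 (\<chi> i. 1)"
      proof -
        have "0 \<le> (fst w + k) $ m \<and> (fst w + k) $ m \<le> 1" for m
        proof -
          have e: "(fst w + k) $ m = frac (fst w $ m)" by (simp add: k_def frac_def)
          show ?thesis unfolding e using frac_ge_0 frac_lt_1 less_imp_le by blast
        qed
        then show ?thesis by (simp add: mem_box_cart)
      qed
      have "(fst w + k, snd w) \<in> K"
        using w c1 unfolding K_def Dom_def by (cases w) auto
      then have "\<bar>F' (fst w + k, snd w) j \<bullet> i\<bar> \<le> b" by (rule b)
      then show "\<bar>F' w j \<bullet> i\<bar> \<le> b" using deriv_periodic[OF R lift C1 k w ij] by simp
    qed
  qed
  then obtain b where b: "\<And>i j w. i \<in> Basis \<Longrightarrow> j \<in> Basis \<Longrightarrow> w \<in> Dom R \<Longrightarrow> \<bar>F' w j \<bullet> i\<bar> \<le> b i j"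
    by metis
  show ?thesis
  proof (intro exI ballI)
    fix w :: "('c,'u,'s) pt" assume w: "w \<in> Dom R"
    have "linear (F' w)"
      using C1 w unfolding C1_on_with_def
      by (meson has_derivative_linear)
    then show "onorm (F' w) \<le> (\<Sum>j\<in>Basis. \<Sum>i\<in>Basis. b i j)"
      by (rule onorm_entries_le) (use b w in auto)
  qed
qed




lemma norm_lx_le: "norm (fst r, fst (snd r)) \<le> norm (r::'a::real_normed_vector \<times> 'b::real_normed_vector \<times> 'c::real_normed_vector)"
  by (cases r) (simp add: norm_Pair real_sqrt_le_mono)

lemma norm_y_le: "norm (snd (snd r)) \<le> norm (r::'a::real_normed_vector \<times> 'b::real_normed_vector \<times> 'c::real_normed_vector)"
  by (cases r) (simp add: norm_Pair real_le_rsqrt)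

lemma norm_emb: "norm ((a,b,0)::'a::real_normed_vector \<times> 'b::real_normed_vector \<times> 'c::real_normed_vector) = norm (a,b)"
  by (simp add: norm_Pair)

lemma blocks:
  fixes F' :: "('c::finite,'u::finite,'s::finite) pt \<Rightarrow> ('c,'u,'s) pt \<Rightarrow> ('c,'u,'s) pt"
  assumes bl: "bounded_linear (F' w)"
  shows "bounded_linear (d_lx_flx F' w)" "bounded_linear (d_y_flx F' w)"
        "bounded_linear (d_y_fy F' w)" "bounded_linear (d_lx_fy F' w)"
        "onorm (d_lx_flx F' w) \<le> onorm (F' w)" "onorm (d_y_flx F' w) \<le> onorm (F' w)"
        "onorm (d_y_fy F' w) \<le> onorm (F' w)" "onorm (d_lx_fy F' w) \<le> onorm (F' w)"
proof -
  interpret f: bounded_linear "F' w" by (rule bl)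
  have Alx: "F' w (a+a', b+b', 0) = F' w (a,b,0) + F' w (a',b',0)" for a a' b b'
    using f.add[of "(a,b,0)" "(a',b',0)"] by simp
  have Ay: "F' w (0, 0, c+c') = F' w (0,0,c) + F' w (0,0,c')" for c c'
    using f.add[of "(0,0,c)" "(0,0,c')"] by simp
  have Slx: "F' w (r *\<^sub>R a, r *\<^sub>R b, 0) = r *\<^sub>R F' w (a,b,0)" for r a b
    using f.scale[of r "(a,b,0)"] by simp
  have Sy: "F' w (0, 0, r *\<^sub>R c) = r *\<^sub>R F' w (0,0,c)" for r c
    using f.scale[of r "(0,0,c)"] by simp
  have l1: "linear (d_lx_flx F' w)"
    by (rule linearI) (auto simp: d_lx_flx_def Let_def Alx Ay Slx Sy)
  have l2: "linear (d_y_flx F' w)"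
    by (rule linearI) (auto simp: d_y_flx_def Let_def Alx Ay Slx Sy)
  have l3: "linear (d_y_fy F' w)"
    by (rule linearI) (auto simp: d_y_fy_def Let_def Alx Ay Slx Sy)
  have l4: "linear (d_lx_fy F' w)"
    by (rule linearI) (auto simp: d_lx_fy_def Let_def Alx Ay Slx Sy)
  show "bounded_linear (d_lx_flx F' w)" "bounded_linear (d_y_flx F' w)"
        "bounded_linear (d_y_fy F' w)" "bounded_linear (d_lx_fy F' w)"
    using l1 l2 l3 l4 by (simp_all add: linear_conv_bounded_linear)
  show "onorm (d_lx_flx F' w) \<le> onorm (F' w)"
  proof (rule onorm_le)
    fix v :: "(real^'c) \<times> (real^'u)"
    obtain a b where v: "v = (a,b)" by (cases v)
    have "norm (d_lx_flx F' w v) \<le> norm (F' w (a,b,0))" unfolding v d_lx_flx_def Let_def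
      using norm_lx_le by simp
    also have "\<dots> \<le> onorm (F' w) * norm v" using onorm[OF bl, of "(a,b,0)"] norm_emb v by metis
    finally show "norm (d_lx_flx F' w v) \<le> onorm (F' w) * norm v" .
  qed
  show "onorm (d_lx_fy F' w) \<le> onorm (F' w)"
  proof (rule onorm_le)
    fix v :: "(real^'c) \<times> (real^'u)"
    obtain a b where v: "v = (a,b)" by (cases v)
    have "norm (d_lx_fy F' w v) \<le> norm (F' w (a,b,0))" unfolding v d_lx_fy_def Let_def
      using norm_y_le by simp
    also have "\<dots> \<le> onorm (F' w) * norm v" using onorm[OF bl, of "(a,b,0)"] norm_emb v by metis
    finally show "norm (d_lx_fy F' w v) \<le> onorm (F' w) * norm v" .
  qed
  show "onorm (d_y_flx F' w) \<le> onorm (F' w)"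
  proof (rule onorm_le)
    fix v :: "real^'s"
    have "norm (d_y_flx F' w v) \<le> norm (F' w (0,0,v))" unfolding d_y_flx_def Let_def
      by (rule norm_lx_le)
    also have "\<dots> \<le> onorm (F' w) * norm v" using onorm[OF bl, of "(0,0,v)"] by (simp add: norm_Pair)
    finally show "norm (d_y_flx F' w v) \<le> onorm (F' w) * norm v" .
  qed
  show "onorm (d_y_fy F' w) \<le> onorm (F' w)"
  proof (rule onorm_le)
    fix v :: "real^'s"
    have "norm (d_y_fy F' w v) \<le> norm (F' w (0,0,v))" unfolding d_y_fy_def Let_def
      by (rule norm_y_le)
    also have "\<dots> \<le> onorm (F' w) * norm v" using onorm[OF bl, of "(0,0,v)"] by (simp add: norm_Pair)
    finally show "norm (d_y_fy F' w v) \<le> onorm (F' w) * norm v" .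
  qed
qed

lemma seg_in: "convex S \<Longrightarrow> a \<in> S \<Longrightarrow> b \<in> S \<Longrightarrow> 0 \<le> t \<Longrightarrow> t \<le> 1 \<Longrightarrow> a + t *\<^sub>R (b - a) \<in> S"
proof -
  assume S: "convex S" "a \<in> S" "b \<in> S" "0 \<le> t" "t \<le> 1"
  have "a + t *\<^sub>R (b - a) = (1 - t) *\<^sub>R a + t *\<^sub>R b" by (simp add: algebra_simps)
  then show ?thesis using convexD[OF S(1,2,3), of "1-t" t] S by simp
qed

lemma path_deriv:
  fixes F :: "('c::finite,'u::finite,'s::finite) pt \<Rightarrow> ('c,'u,'s) pt"
    and F' :: "('c,'u,'s) pt \<Rightarrow> ('c,'u,'s) pt \<Rightarrow> ('c,'u,'s) pt"
  assumes C1: "C1_on_with (Dom R) F F'" and a: "a \<in> Dom R" and b: "b \<in> Dom R" and t: "t \<in> {0..1}"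
  shows "((\<lambda>t. F (a + t *\<^sub>R (b - a))) has_derivative (\<lambda>h. F' (a + t *\<^sub>R (b - a)) (h *\<^sub>R (b - a)))) (at t within {0..1})"
proof (rule has_derivative_in_compose2[where t="Dom R" and g=F and g'=F' and f="\<lambda>t. a + t *\<^sub>R (b - a)" and f'="\<lambda>h. h *\<^sub>R (b - a)" and s="{0..1}" and x=t])
  show "\<And>x. x \<in> Dom R \<Longrightarrow> (F has_derivative F' x) (at x within Dom R)" using C1 unfolding C1_on_with_def by blast
  show "(\<lambda>t. a + t *\<^sub>R (b - a)) ` {0..1} \<subseteq> Dom R" using seg_in[OF Dom_convex a b] by auto
  show "t \<in> {0..1}" by (rule t)
  show "((\<lambda>t. a + t *\<^sub>R (b - a)) has_derivative (\<lambda>h. h *\<^sub>R (b - a))) (at t within {0..1})"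
    by (auto intro!: derivative_eq_intros)
qed

lemma path_deriv_at:
  fixes F :: "('c::finite,'u::finite,'s::finite) pt \<Rightarrow> ('c,'u,'s) pt"
    and F' :: "('c,'u,'s) pt \<Rightarrow> ('c,'u,'s) pt \<Rightarrow> ('c,'u,'s) pt"
  assumes C1: "C1_on_with (Dom R) F F'" and a: "a \<in> Dom R" and b: "b \<in> Dom R" and t: "0 < t" "t < 1"
  shows "((\<lambda>t. F (a + t *\<^sub>R (b - a))) has_derivative (\<lambda>h. F' (a + t *\<^sub>R (b - a)) (h *\<^sub>R (b - a)))) (at t)"
proof -
  have "((\<lambda>t. F (a + t *\<^sub>R (b - a))) has_derivative (\<lambda>h. F' (a + t *\<^sub>R (b - a)) (h *\<^sub>R (b - a)))) (at t within {0<..<1})"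
    by (rule has_derivative_subset[OF path_deriv[OF C1 a b]]) (use t in auto)
  then show ?thesis using at_within_open[of t "{0<..<1::real}"] t by simp
qed

lemma path_cont:
  fixes F :: "('c::finite,'u::finite,'s::finite) pt \<Rightarrow> ('c,'u,'s) pt"
    and F' :: "('c,'u,'s) pt \<Rightarrow> ('c,'u,'s) pt \<Rightarrow> ('c,'u,'s) pt"
  assumes C1: "C1_on_with (Dom R) F F'" and a: "a \<in> Dom R" and b: "b \<in> Dom R"
  shows "continuous_on {0..1} (\<lambda>t. F (a + t *\<^sub>R (b - a)))"
  by (rule has_derivative_continuous_on[OF path_deriv[OF C1 a b]])




lemma ihull_memI:
  fixes A :: "'a::euclidean_space \<Rightarrow> 'b::euclidean_space"
  assumes lin: "linear A"
    and ent: "\<And>i j. i \<in> Basis \<Longrightarrow> j \<in> Basis \<Longrightarrow> \<exists>u\<in>U. A j \<bullet> i = G u j \<bullet> i"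
    and bd: "\<And>i j u. i \<in> Basis \<Longrightarrow> j \<in> Basis \<Longrightarrow> u \<in> U \<Longrightarrow> \<bar>G u j \<bullet> i\<bar> \<le> B"
  shows "A \<in> ihull U G"
  unfolding ihull_def
proof (intro CollectI conjI lin ballI)
  fix i :: 'b and j :: 'a assume i: "i \<in> Basis" and j: "j \<in> (Basis :: 'a set)"
  obtain u where u: "u \<in> U" "A j \<bullet> i = G u j \<bullet> i" using ent[OF i j] by blast
  have bb: "bdd_below ((\<lambda>w. G w j \<bullet> i) ` U)"
    by (rule bdd_belowI[where m="-B"]) (use bd[OF i j] in force)
  have ba: "bdd_above ((\<lambda>w. G w j \<bullet> i) ` U)"
    by (rule bdd_aboveI[where M="B"]) (use bd[OF i j] in force)
  show "(INF w\<in>U. G w j \<bullet> i) \<le> A j \<bullet> i" unfolding u(2) by (rule cINF_lower[OF bb u(1)])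
  show "A j \<bullet> i \<le> (SUP w\<in>U. G w j \<bullet> i)" unfolding u(2) by (rule cSUP_upper[OF u(1) ba])
qed

lemma inner_sum_Basis: "i \<in> Basis \<Longrightarrow> (\<Sum>i'\<in>Basis. c i' *\<^sub>R i') \<bullet> i = (c i :: real)"
  by (simp add: inner_sum_left inner_Basis if_distrib sum.delta cong: if_cong)




theorem corollary4p2:
  fixes F :: "('c::finite,'u::finite,'s::finite) pt \<Rightarrow> ('c,'u,'s) pt"
    and F' :: "('c,'u,'s) pt \<Rightarrow> ('c,'u,'s) pt \<Rightarrow> ('c,'u,'s) pt"
    and R L :: real
  assumes R: "0 < R" "R < 1/4"
    and L: "2 * R / (1/2) < L" "L < 1"
    and lift: "is_torus_lift R F"
    and C1: "C1_on_with (Dom R) F F'"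
    and rate: "rate_conditions_0 R L F'"
    and z: "z \<in> Dom R"
  shows "F ` (closure (Jcu z L) \<inter> (cball (fst z) (1/2) \<times> cball 0 R \<times> cball 0 R))
           \<subseteq> Jcu (F z) L"
proof
  fix v assume "v \<in> F ` (closure (Jcu z L) \<inter> (cball (fst z) (1/2) \<times> cball 0 R \<times> cball 0 R))"
  then obtain w where wcl: "w \<in> closure (Jcu z L)"
    and wb: "w \<in> cball (fst z) (1/2) \<times> cball 0 R \<times> cball 0 R" and v: "v = F w" by auto
  have Lpos: "0 < L" using L R by simp
  have der: "\<And>u. u \<in> Dom R \<Longrightarrow> (F has_derivative F' u) (at u within Dom R)"
    using C1 unfolding C1_on_with_def by blast
  have bl: "\<And>u. u \<in> Dom R \<Longrightarrow> bounded_linear (F' u)"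
    using der has_derivative_bounded_linear by blast
  obtain B where B: "\<And>u. u \<in> Dom R \<Longrightarrow> onorm (F' u) \<le> B"
    using deriv_bounded[OF R(1) lift C1] by blast
  have wD: "w \<in> Dom R" using wb unfolding Dom_def by auto
  define lx :: "('c,'u,'s) pt \<Rightarrow> (real^'c) \<times> (real^'u)" where "lx = (\<lambda>r. (fst r, fst (snd r)))"
  define ys :: "('c,'u,'s) pt \<Rightarrow> real^'s" where "ys = (\<lambda>r. snd (snd r))"
  have cone: "norm (ys w - ys z) \<le> L * norm (lx w - lx z)"
  proof -
    have sub: "Jcu z L \<subseteq> {u. norm (ys u - ys z) \<le> L * norm (lx u - lx z)}"
      unfolding Jcu_def ys_def lx_def using Lpos by (auto simp: less_imp_le)
    have cl: "closed {u. norm (ys u - ys z) \<le> L * norm (lx u - lx z)}"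
      unfolding ys_def lx_def by (intro closed_Collect_le continuous_intros)
    show ?thesis using closure_minimal[OF sub cl] wcl by auto
  qed
  obtain lz xz yz where zz: "z = (lz, xz, yz)" by (cases z) auto
  obtain lw xw yw where ww: "w = (lw, xw, yw)" by (cases w) auto
  define dlx where "dlx = (lw - lz, xw - xz)"
  define dy where "dy = yw - yz"
  have dlx_eq: "lx w - lx z = dlx" and dy_eq: "ys w - ys z = dy"
    unfolding lx_def ys_def dlx_def dy_def zz ww by simp_all
  show "v \<in> Jcu (F z) L"
  proof (cases "dlx = 0")
    case True
    then have "dy = 0" using cone dlx_eq dy_eq by simp
    then have "w = z" using True unfolding zz ww dlx_def dy_def by (simp add: zero_prod_def)
    then show ?thesis unfolding v Jcu_def by simp
  next
    case False
    then have ndlx: "0 < norm dlx" by simp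

    have muB: "onorm (d_y_fy F' u) + (1/L) * onorm (d_lx_fy F' u) \<le> mu_s1 R L F'" if u: "u \<in> Dom R" for u
    proof -
      have "bdd_above ((\<lambda>u. onorm (d_y_fy F' u) + (1/L) * onorm (d_lx_fy F' u)) ` Dom R)"
      proof (rule bdd_aboveI2[where M="B + (1/L)*B"])
        fix x :: "('c,'u,'s) pt" assume x: "x \<in> Dom R"
        have "onorm (d_lx_fy F' x) \<le> B" using blocks(8)[of F' x, OF bl[OF x]] B[OF x] by linarith
        then have "(1/L) * onorm (d_lx_fy F' x) \<le> (1/L)*B" using Lpos by (intro mult_left_mono) auto
        then show "onorm (d_y_fy F' x) + (1/L) * onorm (d_lx_fy F' x) \<le> B + (1/L)*B"
          using blocks(7)[of F' x, OF bl[OF x]] B[OF x] by linarith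
      qed
      then show ?thesis unfolding mu_s1_def by (rule cSUP_upper[OF u])
    qed
    define Sy where "Sy = (SUP u\<in>Dom R. onorm (d_y_flx F' u))"
    have SyB: "onorm (d_y_flx F' u) \<le> Sy" if u: "u \<in> Dom R" for u
    proof -
      have "bdd_above ((\<lambda>u. onorm (d_y_flx F' u)) ` Dom R)"
        by (rule bdd_aboveI2[where M=B]) (use B in \<open>force intro: order_trans[OF blocks(6)[of F', OF bl]]\<close>)
      then show ?thesis unfolding Sy_def by (rule cSUP_upper[OF u])
    qed
    have Sy0: "0 \<le> Sy" using SyB[OF z] onorm_pos_le[OF blocks(2)[of F' z, OF bl[OF z]]] by linarith
    have entB: "\<bar>d_lx_flx F' u j \<bullet> i\<bar> \<le> B" if u: "u \<in> Dom R" and i: "i \<in> Basis" and j: "j \<in> Basis" for u i j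
    proof -
      have "\<bar>d_lx_flx F' u j \<bullet> i\<bar> \<le> norm (d_lx_flx F' u j)" by (rule Basis_le_norm[OF i])
      also have "\<dots> \<le> onorm (d_lx_flx F' u) * norm j" by (rule onorm[OF blocks(1)[of F' u, OF bl[OF u]]])
      also have "\<dots> = onorm (d_lx_flx F' u)" using j by simp
      also have "\<dots> \<le> B" using blocks(5)[of F' u, OF bl[OF u]] B[OF u] by linarith
      finally show ?thesis .
    qed
    have PD: "Pset R z' \<subseteq> Dom R" for z' :: "('c,'u,'s) pt" unfolding Pset_def by auto
    have Mf0: "0 \<le> mset (ihull (Pset R z') (d_lx_flx F'))" if z': "z' \<in> Dom R" for z'
    proof (rule mset_nonneg)
      have "d_lx_flx F' z' \<in> ihull (Pset R z') (d_lx_flx F')"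
      proof (rule ihull_memI)
        show "linear (d_lx_flx F' z')" using blocks(1)[of F' z', OF bl[OF z']] bounded_linear.linear by blast
        show "\<exists>u\<in>Pset R z'. d_lx_flx F' z' j \<bullet> i = d_lx_flx F' u j \<bullet> i" for i j
        proof
          show "z' \<in> Pset R z'" using z' unfolding Pset_def by auto
        qed (rule refl)
        show "\<bar>d_lx_flx F' u j \<bullet> i\<bar> \<le> B" if "i \<in> Basis" "j \<in> Basis" "u \<in> Pset R z'" for i j u
          using entB that PD by blast
      qed
      then show "ihull (Pset R z') (d_lx_flx F') \<noteq> {}" by blast
    qed
    define INFm where "INFm = (INF z\<in>Dom R. mset (ihull (Pset R z) (d_lx_flx F')))"
    have INFle: "INFm \<le> mset (ihull (Pset R z') (d_lx_flx F'))" if z': "z' \<in> Dom R" for z'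
      unfolding INFm_def by (rule cINF_lower[OF bdd_belowI2[where m=0] z']) (rule Mf0)
    have xi_eq: "xi_cu1P R L F' = INFm - L * Sy" unfolding xi_cu1P_def INFm_def Sy_def by simp
    have mu_xi: "mu_s1 R L F' < xi_cu1P R L F'" using rate unfolding rate_conditions_0_def by blast
    have blinlx: "bounded_linear lx" unfolding lx_def
      by (intro bounded_linear_Pair bounded_linear_fst bounded_linear_compose[OF bounded_linear_fst bounded_linear_snd])
    have blinys: "bounded_linear ys" unfolding ys_def
      by (rule bounded_linear_compose[OF bounded_linear_snd bounded_linear_snd])
    define z1 :: "('c,'u,'s) pt" where "z1 = (lw, xw, yz)"
    have z1D: "z1 \<in> Dom R" using wD z unfolding z1_def zz ww Dom_def by auto
    define p1 where "p1 = (\<lambda>t::real. z + t *\<^sub>R (z1 - z))"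
    have p1D: "p1 t \<in> Dom R" if "0 \<le> t" "t \<le> 1" for t
      unfolding p1_def by (rule seg_in[OF Dom_convex z z1D that])
    have lxd: "lx (F' u (z1 - z)) = d_lx_flx F' u dlx" for u
      unfolding z1_def zz lx_def d_lx_flx_def dlx_def Let_def by simp
    have "\<forall>i\<in>Basis. \<exists>t. 0 < t \<and> t < 1 \<and> lx (F z1) \<bullet> i - lx (F z) \<bullet> i = d_lx_flx F' (p1 t) dlx \<bullet> i"
    proof
      fix i :: "(real^'c) \<times> (real^'u)" assume i: "i \<in> Basis"
      have blin: "bounded_linear (\<lambda>r. lx r \<bullet> i)"
        by (rule bounded_linear_compose[OF bounded_linear_inner_left blinlx])
      have "\<exists>t\<in>{0<..<1}. (\<lambda>t. lx (F (p1 t)) \<bullet> i) 1 - (\<lambda>t. lx (F (p1 t)) \<bullet> i) 0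
              = (\<lambda>t h. lx (F' (p1 t) (h *\<^sub>R (z1 - z))) \<bullet> i) t (1 - 0)"
      proof (rule mvt_simple)
        fix t :: real assume "0 \<le> t" "t \<le> 1"
        then show "((\<lambda>t. lx (F (p1 t)) \<bullet> i) has_derivative (\<lambda>h. lx (F' (p1 t) (h *\<^sub>R (z1 - z))) \<bullet> i)) (at t within {0..1})"
          using bounded_linear.has_derivative[OF blin path_deriv[OF C1 z z1D, of t]] unfolding p1_def by auto
      qed simp
      then show "\<exists>t. 0 < t \<and> t < 1 \<and> lx (F z1) \<bullet> i - lx (F z) \<bullet> i = d_lx_flx F' (p1 t) dlx \<bullet> i"
        using lxd by (auto simp: p1_def)
    qed
    then obtain T where T: "\<And>i. i \<in> Basis \<Longrightarrow> 0 < T i \<and> T i < 1 \<and> lx (F z1) \<bullet> i - lx (F z) \<bullet> i = d_lx_flx F' (p1 (T i)) dlx \<bullet> i"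
      by metis
    define A where "A = (\<lambda>v. \<Sum>i\<in>Basis. (d_lx_flx F' (p1 (T i)) v \<bullet> i) *\<^sub>R i)"
    have linA: "linear A" unfolding A_def
    proof (rule linear_compose_sum, rule ballI)
      fix i :: "(real^'c) \<times> (real^'u)" assume i: "i \<in> Basis"
      have pD: "p1 (T i) \<in> Dom R" using p1D T[OF i] by auto
      have "bounded_linear (\<lambda>v. (d_lx_flx F' (p1 (T i)) v \<bullet> i) *\<^sub>R i)"
        by (intro bounded_linear_scaleR_const bounded_linear_inner_left_comp blocks(1)[of F' "p1 (T i)", OF bl[OF pD]])
      then show "linear (\<lambda>v. (d_lx_flx F' (p1 (T i)) v \<bullet> i) *\<^sub>R i)" by (rule bounded_linear.linear)
    qed
    have Aent: "A v \<bullet> i = d_lx_flx F' (p1 (T i)) v \<bullet> i" if "i \<in> Basis" for i v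
      unfolding A_def by (rule inner_sum_Basis[OF that])
    have Adlx: "A dlx = lx (F z1) - lx (F z)"
      by (rule euclidean_eqI) (simp add: Aent T inner_diff_left)
    define mid :: "('c,'u,'s) pt" where "mid = (lz + (1/2) *\<^sub>R (lw - lz), 0, 0)"
    have midD: "mid \<in> Dom R" unfolding mid_def Dom_def using R by auto
    have nlw: "norm (lw - lz) \<le> 1/2" using wb unfolding zz ww by (auto simp: dist_norm norm_minus_commute)
    have p1P: "p1 t \<in> Pset R mid" if t: "0 \<le> t" "t \<le> 1" for t
    proof -
      have e: "fst (p1 t) - fst mid = (t - 1/2) *\<^sub>R (lw - lz)"
        unfolding p1_def z1_def zz mid_def by (simp add: scaleR_diff_left)
      have "\<bar>t - 1/2\<bar> \<le> 1/2" using t by (auto simp: abs_if)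
      then have "\<bar>t - 1/2\<bar> * norm (lw - lz) \<le> 1/2 * (1/2)"
        using nlw by (intro mult_mono) auto
      then have "norm (fst (p1 t) - fst mid) \<le> 1/4" unfolding e by simp
      then show ?thesis unfolding Pset_def using p1D[OF t] by auto
    qed
    have AinH: "A \<in> ihull (Pset R mid) (d_lx_flx F')"
    proof (rule ihull_memI[OF linA])
      show "\<exists>u\<in>Pset R mid. A j \<bullet> i = d_lx_flx F' u j \<bullet> i" if "i \<in> Basis" "j \<in> Basis" for i j
        using Aent[OF that(1)] p1P T[OF that(1)] by (metis less_imp_le)
      show "\<bar>d_lx_flx F' u j \<bullet> i\<bar> \<le> B" if "i \<in> Basis" "j \<in> Basis" "u \<in> Pset R mid" for i j u
        using entB that PD by blast
    qed
    have leg1: "INFm * norm dlx \<le> norm (lx (F z1) - lx (F z))"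
    proof -
      have "INFm \<le> mlow A" using INFle[OF midD] mset_le[OF AinH] by linarith
      then have "INFm * norm dlx \<le> mlow A * norm dlx" by (rule mult_right_mono) simp
      also have "\<dots> \<le> norm (A dlx)" by (rule mlow_le)
      finally show ?thesis unfolding Adlx .
    qed
    have wz1: "w - z1 = (0, 0, dy)" unfolding z1_def ww dy_def zz by simp
    have "\<exists>t\<in>{0<..<1}. norm ((\<lambda>t. lx (F (z1 + t *\<^sub>R (w - z1)))) 1 - (\<lambda>t. lx (F (z1 + t *\<^sub>R (w - z1)))) 0)
            \<le> norm ((\<lambda>t h. lx (F' (z1 + t *\<^sub>R (w - z1)) (h *\<^sub>R (w - z1)))) t (1 - 0))"
    proof (rule mvt_general)
      show "continuous_on {0..1} (\<lambda>t. lx (F (z1 + t *\<^sub>R (w - z1))))"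
        using continuous_on_compose2[OF linear_continuous_on[OF blinlx, of UNIV] path_cont[OF C1 z1D wD]] by simp
      fix t :: real assume "0 < t" "t < 1"
      then show "((\<lambda>t. lx (F (z1 + t *\<^sub>R (w - z1)))) has_derivative (\<lambda>h. lx (F' (z1 + t *\<^sub>R (w - z1)) (h *\<^sub>R (w - z1))))) (at t)"
        using bounded_linear.has_derivative[OF blinlx path_deriv_at[OF C1 z1D wD]] by auto
    qed simp
    then obtain t2 where t2: "0 < t2" "t2 < 1"
      and t2e: "norm (lx (F w) - lx (F z1)) \<le> norm (lx (F' (z1 + t2 *\<^sub>R (w - z1)) (w - z1)))" by auto
    have p2D: "z1 + t2 *\<^sub>R (w - z1) \<in> Dom R" by (rule seg_in[OF Dom_convex z1D wD]) (use t2 in auto)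
    have leg2: "norm (lx (F w) - lx (F z1)) \<le> Sy * (L * norm dlx)"
    proof -
      define p2 where "p2 = z1 + t2 *\<^sub>R (w - z1)"
      have p2D': "p2 \<in> Dom R" unfolding p2_def by (rule p2D)
      have eq: "lx (F' p2 (w - z1)) = d_y_flx F' p2 dy"
        unfolding wz1 lx_def d_y_flx_def Let_def by (simp only: fst_conv snd_conv)
      have t2e': "norm (lx (F w) - lx (F z1)) \<le> norm (lx (F' p2 (w - z1)))"
        using t2e unfolding p2_def .
      have "norm (lx (F w) - lx (F z1)) \<le> norm (d_y_flx F' p2 dy)"
        using t2e' unfolding eq .
      also have "\<dots> \<le> onorm (d_y_flx F' p2) * norm dy"
        by (rule onorm[OF blocks(2)[of F' p2, OF bl[OF p2D']]])
      finally have "norm (lx (F w) - lx (F z1)) \<le> onorm (d_y_flx F' (z1 + t2 *\<^sub>R (w - z1))) * norm dy"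
        unfolding p2_def .
      also have "\<dots> \<le> Sy * norm dy" by (rule mult_right_mono[OF SyB[OF p2D]]) simp
      also have "\<dots> \<le> Sy * (L * norm dlx)" using cone dlx_eq dy_eq Sy0 by (simp add: mult_left_mono)
      finally show ?thesis .
    qed
    have lxbound: "xi_cu1P R L F' * norm dlx \<le> norm (lx (F w) - lx (F z))"
    proof -
      have "norm (lx (F z1) - lx (F z)) \<le> norm (lx (F w) - lx (F z)) + norm (lx (F w) - lx (F z1))"
        using norm_triangle_ineq4[of "lx (F w) - lx (F z)" "lx (F w) - lx (F z1)"] by simp
      then show ?thesis using leg1 leg2 unfolding xi_eq by (simp add: algebra_simps)
    qed
    have "\<exists>t\<in>{0<..<1}. norm ((\<lambda>t. ys (F (z + t *\<^sub>R (w - z)))) 1 - (\<lambda>t. ys (F (z + t *\<^sub>R (w - z)))) 0)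
            \<le> norm ((\<lambda>t h. ys (F' (z + t *\<^sub>R (w - z)) (h *\<^sub>R (w - z)))) t (1 - 0))"
    proof (rule mvt_general)
      show "continuous_on {0..1} (\<lambda>t. ys (F (z + t *\<^sub>R (w - z))))"
        using continuous_on_compose2[OF linear_continuous_on[OF blinys, of UNIV] path_cont[OF C1 z wD]] by simp
      fix t :: real assume "0 < t" "t < 1"
      then show "((\<lambda>t. ys (F (z + t *\<^sub>R (w - z)))) has_derivative (\<lambda>h. ys (F' (z + t *\<^sub>R (w - z)) (h *\<^sub>R (w - z))))) (at t)"
        using bounded_linear.has_derivative[OF blinys path_deriv_at[OF C1 z wD]] by auto
    qed simp
    then obtain t3 where t3: "0 < t3" "t3 < 1"
      and t3e: "norm (ys (F w) - ys (F z)) \<le> norm (ys (F' (z + t3 *\<^sub>R (w - z)) (w - z)))" by auto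
    define q where "q = z + t3 *\<^sub>R (w - z)"
    have qD: "q \<in> Dom R" unfolding q_def by (rule seg_in[OF Dom_convex z wD]) (use t3 in auto)
    have ysplit: "ys (F' q (w - z)) = d_lx_fy F' q dlx + d_y_fy F' q dy"
    proof -
      have "w - z = (lw - lz, xw - xz, 0) + (0, 0, dy)" unfolding ww zz dy_def by simp
      then have "F' q (w - z) = F' q (lw - lz, xw - xz, 0) + F' q (0, 0, dy)"
        using linear_add[OF bounded_linear.linear[OF bl[OF qD]], of "(lw - lz, xw - xz, 0)" "(0, 0, dy)"] by simp
      then show ?thesis unfolding ys_def d_lx_fy_def d_y_fy_def dlx_def by simp
    qed
    have ybound: "norm (ys (F w) - ys (F z)) \<le> L * mu_s1 R L F' * norm dlx"
    proof -
      have "norm (ys (F w) - ys (F z)) \<le> norm (d_lx_fy F' q dlx) + norm (d_y_fy F' q dy)"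
        using t3e ysplit norm_triangle_ineq[of "d_lx_fy F' q dlx" "d_y_fy F' q dy"] unfolding q_def by simp
      also have "\<dots> \<le> onorm (d_lx_fy F' q) * norm dlx + onorm (d_y_fy F' q) * norm dy"
        using onorm[OF blocks(4)[of F' q, OF bl[OF qD]], of dlx] onorm[OF blocks(3)[of F' q, OF bl[OF qD]], of dy] by linarith
      also have "\<dots> \<le> onorm (d_lx_fy F' q) * norm dlx + onorm (d_y_fy F' q) * (L * norm dlx)"
        using cone dlx_eq dy_eq onorm_pos_le[OF blocks(3)[of F' q, OF bl[OF qD]]] by (simp add: mult_left_mono)
      also have "\<dots> = L * (onorm (d_y_fy F' q) + (1/L) * onorm (d_lx_fy F' q)) * norm dlx"
        using Lpos by (simp add: field_simps)
      also have "\<dots> \<le> L * mu_s1 R L F' * norm dlx"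
        using muB[OF qD] Lpos by (intro mult_right_mono mult_left_mono) auto
      finally show ?thesis .
    qed
    have "L * mu_s1 R L F' * norm dlx < L * xi_cu1P R L F' * norm dlx"
      using mu_xi Lpos ndlx by simp
    also have "\<dots> \<le> L * norm (lx (F w) - lx (F z))" using lxbound Lpos
      by (metis mult.assoc mult_le_cancel_left_pos)
    finally have "norm (ys (F w) - ys (F z)) < L * norm (lx (F w) - lx (F z))" using ybound by linarith
    then show ?thesis unfolding v Jcu_def lx_def ys_def by simp
  qed
qed


end
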